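(* Let $w:\mathbb R^2\to\mathbb R^2$ be any function and $c>0$ a constant such that \[\langle x-y,w(x)-w(y)\rangle>c\,\|w(x)-w(y)\|\] for all $x,y\in\mathbb R^2$ with $\|x-y\|>1$. Put $a:=\min\{c/2,1/2\}$. Then for all $x,y\in\mathbb R^2$ with $\|x-y\|>1$, \[\langle x-y,\,w(x)-w(y)\rangle\ \ge\ a\,\|x-y\|\,\|w(x)-w(y)\| ,\] i.e. the angle between $w(x)-w(y)$ and $x-y$ is at most $\arccos a$ whenever $w(x)\ne w(y)$.
   Context: $\langle\cdot,\cdot\rangle$ and $\|\cdot\|$ denote the standard inner product and Euclidean norm on $\mathbb R^2$. *)

theory Defs
  imports "HOL-Analysis.Analysis"
begin

end

theory Submission imports Defs begin

definition cr :: "real^2 \<Rightarrow> real^2 \<Rightarrow> real" where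
  "cr a b = a$1 * b$2 - a$2 * b$1"

lemma inner2: "(a::real^2) \<bullet> b = a$1*b$1 + a$2*b$2"
  by (simp add: inner_vec_def sum_2)

lemma normsq2: "(norm (a::real^2))^2 = a$1^2 + a$2^2"
proof -
  have "(norm a)^2 = a \<bullet> a" by (simp add: dot_square_norm)
  thus ?thesis by (simp add: inner2 power2_eq_square)
qed

lemma lagrange: "(a \<bullet> b)^2 + (cr a b)^2 = (norm a)^2 * (norm b)^2"
  unfolding normsq2 inner2 cr_def by (simp add: algebra_simps power2_eq_square)

lemma crid: "(norm u)^2 * cr d q = (u \<bullet> d) * cr u q - cr u d * (u \<bullet> q)"
  unfolding normsq2 inner2 cr_def by (simp add: algebra_simps power2_eq_square)

lemma real_key:
  fixes A B P Q L D N :: real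
  assumes "A \<ge> 0" "B > 0" "D > 0" "N \<ge> 0" "A^2 + B^2 = L^2*D^2" "P^2+Q^2 = L^2*N^2"
    "P * D > A * N"
  shows "A * Q - B * P < 0"
proof -
  have an: "A * N \<ge> 0" using assms by simp
  have "(A*N)^2 < (P*D)^2" using an assms(7) by (simp add: power_strict_mono)
  hence "A^2*N^2 < P^2*D^2" by (simp add: power_mult_distrib)
  hence "(L^2*D^2 - B^2)*N^2 < (L^2*N^2 - Q^2)*D^2" using assms(5,6)
    by (smt (verit))
  hence "(D*Q)^2 < (B*N)^2" by (simp add: algebra_simps power_mult_distrib)
  hence "\<bar>D*Q\<bar>^2 < (B*N)^2" by simp
  hence "\<bar>D*Q\<bar> < B*N" by (rule power_less_imp_less_base) (use assms in simp)
  hence dq: "D*\<bar>Q\<bar> < B*N" using assms(3) by (simp add: abs_mult)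
  have "A*\<bar>Q\<bar>*D \<le> A*B*N" using dq assms(1) by (smt (verit) mult.commute mult_left_mono mult.assoc)
  also have "A*B*N < B*P*D" using assms(2,7) by (smt (verit) mult.commute mult_strict_left_mono mult.assoc)
  finally have "A*\<bar>Q\<bar>*D < B*P*D" .
  hence "A*\<bar>Q\<bar> < B*P" using assms(3) by simp
  moreover have "A*Q \<le> A*\<bar>Q\<bar>" using assms(1) by (simp add: mult_left_mono)
  ultimately show ?thesis by simp
qed

lemma core:
  fixes u d q :: "real^2"
  assumes "u \<bullet> d \<ge> 0" "cr u d > 0" "d \<noteq> 0" "(u \<bullet> q) * norm d > (u \<bullet> d) * norm q"
  shows "cr d q < 0"
proof -
  have "u \<noteq> 0" using assms(2) by (auto simp: cr_def)
  hence L: "(norm u)^2 > 0" by simp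
  have "(u \<bullet> d) * cr u q - cr u d * (u \<bullet> q) < 0"
    apply (rule real_key[where L="norm u" and D="norm d" and N="norm q"])
    using assms lagrange[of u d] lagrange[of u q] by (auto simp: power_mult_distrib)
  hence "(norm u)^2 * cr d q < 0" using crid by metis
  thus ?thesis using L by (simp add: mult_less_0_iff)
qed

lemma core2:
  fixes u d q :: "real^2"
  assumes "u \<bullet> d \<ge> 0" "cr u d < 0" "d \<noteq> 0" "(u \<bullet> q) * norm d > (u \<bullet> d) * norm q"
  shows "cr d q > 0"
proof -
  have "u \<noteq> 0" using assms(2) by (auto simp: cr_def)
  hence L: "(norm u)^2 > 0" by simp
  have "(u \<bullet> d) * (- cr u q) - (- cr u d) * (u \<bullet> q) < 0"
    apply (rule real_key[where L="norm u" and D="norm d" and N="norm q"])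
    using assms lagrange[of u d] lagrange[of u q] by (auto simp: power_mult_distrib)
  moreover have "(norm u)^2 * cr d q = - ((u \<bullet> d) * (- cr u q) - (- cr u d) * (u \<bullet> q))"
    using crid[of u d q] by simp
  ultimately have "(norm u)^2 * cr d q > 0" by linarith
  thus ?thesis using L by (simp add: zero_less_mult_iff)
qed

lemma cr_sum: "cr d (\<Sum>i\<in>S. f i) = (\<Sum>i\<in>S. cr d (f i))"
  by (simp add: cr_def sum_component sum_distrib_left sum_subtractf)

lemma cr_self: "cr d d = 0" by (simp add: cr_def)

theorem mainTheorem5:
  fixes w :: "real^2 \<Rightarrow> real^2" and c :: real
  assumes "c > 0"
    and "\<And>x y. norm (x - y) > 1 \<Longrightarrow> (x - y) \<bullet> (w x - w y) > c * norm (w x - w y)"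
  shows "\<forall>x y. norm (x - y) > 1 \<longrightarrow>
           (x - y) \<bullet> (w x - w y) \<ge> min (c/2) (1/2) * norm (x - y) * norm (w x - w y)"
proof (intro allI impI)
  fix x y :: "real^2"
  assume L1: "norm (x - y) > 1"
  define u where "u = x - y"
  define d where "d = w x - w y"
  define a where "a = min (c/2) (1/2)"
  define L where "L = norm u"
  define D where "D = norm d"
  have hyp: "u \<bullet> d > c * D" using assms(2)[OF L1] by (simp add: u_def d_def D_def)
  have D0: "D \<ge> 0" by (simp add: D_def)
  have A0: "u \<bullet> d \<ge> 0" using hyp D0 assms(1) by (smt (verit) mult_nonneg_nonneg)
  have Dp: "D > 0" using hyp D0 by (cases "D = 0") (auto simp: D_def d_def)
  hence dnz: "d \<noteq> 0" by (auto simp: D_def)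
  have L1': "L > 1" using L1 by (simp add: L_def u_def)
  show "(x - y) \<bullet> (w x - w y) \<ge> min (c/2) (1/2) * norm (x - y) * norm (w x - w y)"
  proof (rule ccontr)
    assume "\<not> ?thesis"
    hence neg: "u \<bullet> d < a * L * D" by (simp add: u_def d_def a_def L_def D_def)
    define k where "k = nat \<lceil>L/2\<rceil>"
    have rk: "real k = of_int \<lceil>L/2\<rceil>" using L1' unfolding k_def by simp
    have k1: "real k \<ge> L/2" using rk ceiling_correct[of "L/2"] by linarith
    have k2: "real k < L/2 + 1" using rk ceiling_correct[of "L/2"] by linarith
    have kpos: "k > 0" using k1 L1' by (cases k) auto
    have kL: "real k < L"
    proof (cases "L \<le> 2")
      case True
      hence "real k < 2" using k2 by linarith
      hence "k = 1" using kpos by linarith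
      thus ?thesis using L1' by simp
    next
      case False thus ?thesis using k2 by linarith
    qed
    define v where "v = (1 / real k) *\<^sub>R u"
    have nv: "norm v = L / real k" using kpos by (simp add: v_def L_def)
    have "L / real k > 1" using kL kpos by (simp add: less_divide_eq)
    hence nv1: "norm v > 1" using nv by simp
    have uv: "u = real k *\<^sub>R v" using kpos by (simp add: v_def)
    define z where "z i = y + real i *\<^sub>R v" for i :: nat
    define q where "q i = w (z (Suc i)) - w (z i)" for i
    have zk: "z k = x" using uv by (simp add: z_def u_def algebra_simps)
    have z0: "z 0 = y" by (simp add: z_def)
    have dsum: "d = (\<Sum>i<k. q i)"
      unfolding q_def using sum_lessThan_telescope[of "\<lambda>i. w (z i)" k] zk z0 by (simp add: d_def)
    have qprop: "(u \<bullet> q i) * D > (u \<bullet> d) * norm (q i)" for i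
    proof -
      have zd: "z (Suc i) - z i = v" by (simp add: z_def algebra_simps)
      have h: "v \<bullet> q i > c * norm (q i)" using assms(2)[of "z (Suc i)" "z i"] zd nv1 by (simp add: q_def)
      have "u \<bullet> q i = real k * (v \<bullet> q i)" by (simp add: uv)
      have "a * L \<le> (c/2) * L" unfolding a_def using L1' by (intro mult_right_mono) auto
      also have "\<dots> = c * (L/2)" by simp
      also have "\<dots> \<le> c * real k" using k1 assms(1) by (intro mult_left_mono) auto
      finally have "a * L \<le> c * real k" .
      hence "a * L * norm (q i) \<le> c * real k * norm (q i)" by (simp add: mult_right_mono)
      also have "\<dots> < real k * (v \<bullet> q i)" using h kpos by simp
      also have "\<dots> = u \<bullet> q i" by (simp add: uv)
      finally have "a * L * norm (q i) < u \<bullet> q i" .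
      hence "a * L * norm (q i) * D < (u \<bullet> q i) * D" using Dp by simp
      moreover have "(u \<bullet> d) * norm (q i) \<le> a * L * D * norm (q i)" using neg by (simp add: mult_right_mono)
      ultimately show ?thesis by (simp add: algebra_simps)
    qed
    have crsum: "(\<Sum>i<k. cr d (q i)) = 0" using cr_sum[of d q "{..<k}"] dsum cr_self[of d] by simp
    consider "cr u d > 0" | "cr u d < 0" | "cr u d = 0" by linarith
    thus False
    proof cases
      case 1
      have "\<And>i. cr d (q i) < 0" using core[OF A0 1 dnz] qprop by (simp add: D_def)
      hence "(\<Sum>i<k. - cr d (q i)) > 0" using kpos by (intro sum_pos) auto
      thus False using crsum by (simp add: sum_negf)
    next
      case 2
      have "\<And>i. cr d (q i) > 0" using core2[OF A0 2 dnz] qprop by (simp add: D_def)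
      hence "(\<Sum>i<k. cr d (q i)) > 0" using kpos by (intro sum_pos) auto
      thus False using crsum by simp
    next
      case 3
      have "(u \<bullet> d)^2 = (L * D)^2" using lagrange[of u d] 3 by (simp add: L_def D_def power_mult_distrib)
      hence "u \<bullet> d = L * D" using A0 L1' D0 by (simp add: power2_eq_iff_nonneg)
      moreover have "a * L * D \<le> L * D" unfolding a_def using L1' D0 by (simp add: mult_right_mono)
      ultimately show False using neg by simp
    qed
  qed
qed

end
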